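(* Let $X$ and $Y$ be real separated locally convex spaces, $U\subseteq X$ and $V\subseteq Y$ convex sets, and $A:X\to Y$ a linear continuous mapping. Then $$(0,0)\in {}^{ic}\big(U\times V-\Delta_X^A\big)\iff 0\in {}^{ic}\big(V-A(U)\big).$$
   Context: $\Delta_X^A:=\{(x,Ax):x\in X\}\subseteq X\times Y$. For a set $D$ in a real separated locally convex space $E$: $\operatorname{aff}D$ is its affine hull; $\operatorname{icr}D=\{u\in E:\forall x\in\operatorname{aff}(D-D)\ \exists\delta>0\ \forall\lambda\in[0,\delta]:\ u+\lambda x\in D\}$; the intrinsic relative algebraic interior is ${}^{ic}D=\operatorname{icr}D$ if $\operatorname{aff}D$ is closed and ${}^{ic}D=\emptyset$ otherwise. *)

theory Defs
  imports "HOL-Analysis.Analysis"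
begin

definition sep_lcs :: "'a::real_vector topology \<Rightarrow> bool" where
  "sep_lcs T \<longleftrightarrow> topspace T = UNIV \<and> Hausdorff_space T
     \<and> continuous_map (prod_topology T T) T (\<lambda>(x, y). x + y)
     \<and> continuous_map (prod_topology euclideanreal T) T (\<lambda>(c, x). c *\<^sub>R x)
     \<and> (\<forall>x W. openin T W \<and> x \<in> W \<longrightarrow> (\<exists>V. openin T V \<and> convex V \<and> x \<in> V \<and> V \<subseteq> W))"

definition msub :: "'a::ab_group_add set \<Rightarrow> 'a set \<Rightarrow> 'a set" where
  "msub C D = {c - d | c d. c \<in> C \<and> d \<in> D}"

definition graph_set :: "('a \<Rightarrow> 'b) \<Rightarrow> ('a \<times> 'b) set" where
  "graph_set A = {(x, A x) | x. True}"

definition icr :: "'a::real_vector set \<Rightarrow> 'a set" where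
  "icr D = {u. \<forall>x \<in> affine hull (msub D D). \<exists>\<delta>>0. \<forall>t\<in>{0..\<delta>}. u + t *\<^sub>R x \<in> D}"

definition ic :: "'a::real_vector topology \<Rightarrow> 'a set \<Rightarrow> 'a set" where
  "ic T D = (if closedin T (affine hull D) then icr D else {})"

end

theory Submission
  imports Defs
begin

lemma aff_pre:
  fixes A :: "'a::real_vector \<Rightarrow> 'b::real_vector" and S :: "'b set"
  assumes "linear A"
  shows "affine hull {p. snd p - A (fst p) \<in> S} = {p. snd p - A (fst p) \<in> affine hull S}"
proof
  have "affine {p. snd p - A (fst p) \<in> affine hull S}"
  proof (rule affine_def[THEN iffD2], intro ballI allI impI)
    fix p q :: "'a \<times> 'b" and u v :: real
    assume h0: "p \<in> {p. snd p - A (fst p) \<in> affine hull S}" "q \<in> {p. snd p - A (fst p) \<in> affine hull S}" "u + v = 1"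
    then have h: "snd p - A (fst p) \<in> affine hull S" "snd q - A (fst q) \<in> affine hull S" by auto
    have "snd (u *\<^sub>R p + v *\<^sub>R q) - A (fst (u *\<^sub>R p + v *\<^sub>R q)) = u *\<^sub>R (snd p - A (fst p)) + v *\<^sub>R (snd q - A (fst q))"
      using assms by (simp add: linear_add linear_scale algebra_simps)
    also have "\<dots> \<in> affine hull S"
      using h h0(3) affine_affine_hull[of S] unfolding affine_def by blast
    finally show "u *\<^sub>R p + v *\<^sub>R q \<in> {p. snd p - A (fst p) \<in> affine hull S}" by simp
  qed
  then show "affine hull {p. snd p - A (fst p) \<in> S} \<subseteq> {p. snd p - A (fst p) \<in> affine hull S}"
    by (intro hull_minimal) (auto intro: hull_inc)
next
  let ?P = "{p. snd p - A (fst p) \<in> S}"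
  let ?H = "{w. \<forall>a. (a, w + A a) \<in> affine hull ?P}"
  have "affine ?H"
  proof (rule affine_def[THEN iffD2], intro ballI allI impI, simp, intro allI)
    fix w1 w2 a and u v :: real
    assume h: "\<forall>a. (a, w1 + A a) \<in> affine hull ?P" "\<forall>a. (a, w2 + A a) \<in> affine hull ?P" "u + v = 1"
    have "u *\<^sub>R (a, w1 + A a) + v *\<^sub>R (a, w2 + A a) \<in> affine hull ?P"
      using h affine_affine_hull[of ?P] unfolding affine_def by blast
    moreover have "u *\<^sub>R (a, w1 + A a) + v *\<^sub>R (a, w2 + A a) = (a, u *\<^sub>R w1 + v *\<^sub>R w2 + A a)"
      using h(3) by (simp add: algebra_simps flip: scaleR_add_left)
    ultimately show "(a, u *\<^sub>R w1 + v *\<^sub>R w2 + A a) \<in> affine hull ?P" by simp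
  qed
  moreover have "S \<subseteq> ?H" by (auto intro: hull_inc)
  ultimately have *: "affine hull S \<subseteq> ?H" by (intro hull_minimal)
  show "{p. snd p - A (fst p) \<in> affine hull S} \<subseteq> affine hull ?P"
  proof
    fix p assume "p \<in> {p. snd p - A (fst p) \<in> affine hull S}"
    then have "(fst p, (snd p - A (fst p)) + A (fst p)) \<in> affine hull ?P" using * by blast
    then show "p \<in> affine hull ?P" by simp
  qed
qed

lemma D_eq:
  assumes "linear A"
  shows "msub (U \<times> V) (graph_set A) = {p. snd p - A (fst p) \<in> msub V (A ` U)}"
proof (rule set_eqI, rule iffI)
  fix p assume "p \<in> msub (U \<times> V) (graph_set A)"
  then obtain u v x where h: "u \<in> U" "v \<in> V" "p = (u - x, v - A x)"
    by (auto simp: msub_def graph_set_def)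
  then have "snd p - A (fst p) = v - A u" using assms by (simp add: linear_diff)
  with h show "p \<in> {p. snd p - A (fst p) \<in> msub V (A ` U)}"
    unfolding msub_def by blast
next
  fix p assume "p \<in> {p. snd p - A (fst p) \<in> msub V (A ` U)}"
  then obtain u v where h: "u \<in> U" "v \<in> V" "snd p - A (fst p) = v - A u"
    by (auto simp: msub_def)
  have "p = (u, v) - (u - fst p, A (u - fst p))"
    using h(3) assms by (auto simp: linear_diff algebra_simps prod_eq_iff)
  then show "p \<in> msub (U \<times> V) (graph_set A)"
    using h unfolding msub_def graph_set_def by blast
qed

lemma msub_pre:
  assumes "linear A"
  shows "msub {p. snd p - A (fst p) \<in> W} {p. snd p - A (fst p) \<in> W}
       = {p. snd p - A (fst p) \<in> msub W W}"
proof (rule set_eqI, rule iffI)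
  fix p assume "p \<in> msub {p. snd p - A (fst p) \<in> W} {p. snd p - A (fst p) \<in> W}"
  then obtain c d where h: "p = c - d" "snd c - A (fst c) \<in> W" "snd d - A (fst d) \<in> W"
    by (auto simp: msub_def)
  have "snd p - A (fst p) = (snd c - A (fst c)) - (snd d - A (fst d))"
    using h(1) assms by (simp add: linear_diff)
  with h show "p \<in> {p. snd p - A (fst p) \<in> msub W W}"
    unfolding msub_def by blast
next
  fix p assume "p \<in> {p. snd p - A (fst p) \<in> msub W W}"
  then obtain w w' where h: "w \<in> W" "w' \<in> W" "snd p - A (fst p) = w - w'"
    by (auto simp: msub_def)
  have "p = (fst p, w + A (fst p)) - (0, w')"
    using h(3) assms by (auto simp: linear_0 algebra_simps prod_eq_iff)
  moreover have "snd (fst p, w + A (fst p)) - A (fst (fst p, w + A (fst p))) \<in> W" using h by simp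
  moreover have "snd (0::'a, w') - A (fst (0::'a, w')) \<in> W" using h assms by (simp add: linear_0)
  ultimately show "p \<in> msub {p. snd p - A (fst p) \<in> W} {p. snd p - A (fst p) \<in> W}"
    unfolding msub_def by blast
qed

theorem lemma1p1:
  fixes TX :: "'a::real_vector topology" and TY :: "'b::real_vector topology"
    and U :: "'a set" and V :: "'b set" and A :: "'a \<Rightarrow> 'b"
  assumes "sep_lcs TX" and "sep_lcs TY"
    and "convex U" and "convex V"
    and "linear A" and "continuous_map TX TY A"
  shows "(0, 0) \<in> ic (prod_topology TX TY) (msub (U \<times> V) (graph_set A))
     \<longleftrightarrow> 0 \<in> ic TY (msub V (A ` U))"
proof -
  define W where "W = msub V (A ` U)"
  define \<Phi> where "\<Phi> = (\<lambda>p::'a\<times>'b. snd p - A (fst p))"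
  have D: "msub (U \<times> V) (graph_set A) = {p. \<Phi> p \<in> W}"
    unfolding W_def \<Phi>_def using D_eq[OF assms(5)] .
  have tX: "topspace TX = UNIV" and tY: "topspace TY = UNIV"
    using assms(1,2) by (auto simp: sep_lcs_def)
  have add: "continuous_map (prod_topology TY TY) TY (\<lambda>(x, y). x + y)"
   and scl: "continuous_map (prod_topology euclideanreal TY) TY (\<lambda>(c, x). c *\<^sub>R x)"
    using assms(2) by (auto simp: sep_lcs_def)
  have cneg: "continuous_map (prod_topology TX TY) TY (\<lambda>p. (-1::real) *\<^sub>R A (fst p))"
  proof -
    have "continuous_map (prod_topology TX TY) (prod_topology euclideanreal TY) (\<lambda>p. (-1::real, A (fst p)))"
      by (intro continuous_map_pairedI continuous_map_const[THEN iffD2] continuous_map_compose[OF continuous_map_fst assms(6), unfolded o_def]) simp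
    from continuous_map_compose[OF this scl] show ?thesis by (simp add: o_def)
  qed
  have cPhi: "continuous_map (prod_topology TX TY) TY \<Phi>"
  proof -
    have "continuous_map (prod_topology TX TY) (prod_topology TY TY) (\<lambda>p. (snd p, (-1::real) *\<^sub>R A (fst p)))"
      by (intro continuous_map_pairedI continuous_map_snd cneg)
    from continuous_map_compose[OF this add] show ?thesis by (simp add: o_def \<Phi>_def)
  qed
  have cinj: "continuous_map TY (prod_topology TX TY) (\<lambda>w. (0, w))"
    by (intro continuous_map_pairedI continuous_map_const[THEN iffD2] continuous_map_id[unfolded id_def]) (simp add: tX)
  have affD: "affine hull {p. \<Phi> p \<in> W} = {p. \<Phi> p \<in> affine hull W}"
    unfolding \<Phi>_def using aff_pre[OF assms(5)] .
  have closed_eq: "closedin (prod_topology TX TY) {p. \<Phi> p \<in> affine hull W} \<longleftrightarrow> closedin TY (affine hull W)"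
  proof
    assume "closedin (prod_topology TX TY) {p. \<Phi> p \<in> affine hull W}"
    from closedin_continuous_map_preimage[OF cinj this]
    show "closedin TY (affine hull W)" using assms(5) by (simp add: tY \<Phi>_def linear_0)
  next
    assume "closedin TY (affine hull W)"
    from closedin_continuous_map_preimage[OF cPhi this]
    show "closedin (prod_topology TX TY) {p. \<Phi> p \<in> affine hull W}" by (simp add: tX tY)
  qed
  have mD: "msub {p. \<Phi> p \<in> W} {p. \<Phi> p \<in> W} = {p. \<Phi> p \<in> msub W W}"
    unfolding \<Phi>_def using msub_pre[OF assms(5)] .
  have affmD: "affine hull (msub {p. \<Phi> p \<in> W} {p. \<Phi> p \<in> W}) = {p. \<Phi> p \<in> affine hull (msub W W)}"
    unfolding mD unfolding \<Phi>_def using aff_pre[OF assms(5)] .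
  have Phi_scale: "\<Phi> (t *\<^sub>R p) = t *\<^sub>R \<Phi> p" for t p
    using assms(5) by (simp add: \<Phi>_def linear_scale scaleR_diff_right)
  have icr_eq: "(0, 0) \<in> icr {p. \<Phi> p \<in> W} \<longleftrightarrow> 0 \<in> icr W"
  proof
    assume h: "(0, 0) \<in> icr {p. \<Phi> p \<in> W}"
    show "0 \<in> icr W" unfolding icr_def
    proof (safe)
      fix z assume z: "z \<in> affine hull msub W W"
      have "\<Phi> (0, z) = z" using assms(5) by (simp add: \<Phi>_def linear_0)
      with z have "(0, z) \<in> affine hull (msub {p. \<Phi> p \<in> W} {p. \<Phi> p \<in> W})"
        unfolding affmD by simp
      with h obtain \<delta> where "\<delta> > 0" "\<forall>t\<in>{0..\<delta>}. (0,0) + t *\<^sub>R (0, z) \<in> {p. \<Phi> p \<in> W}"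
        unfolding icr_def by blast
      then show "\<exists>\<delta>>0. \<forall>t\<in>{0..\<delta>}. 0 + t *\<^sub>R z \<in> W"
        using assms(5) by (auto simp: \<Phi>_def linear_0)
    qed
  next
    assume h: "0 \<in> icr W"
    show "(0, 0) \<in> icr {p. \<Phi> p \<in> W}" unfolding icr_def
    proof (safe)
      fix a b assume "(a, b) \<in> affine hull msub {p. \<Phi> p \<in> W} {p. \<Phi> p \<in> W}"
      then have "\<Phi> (a, b) \<in> affine hull msub W W" unfolding affmD by simp
      with h obtain \<delta> where "\<delta> > 0" "\<forall>t\<in>{0..\<delta>}. 0 + t *\<^sub>R \<Phi> (a, b) \<in> W"
        unfolding icr_def by blast
      then show "\<exists>\<delta>>0. \<forall>t\<in>{0..\<delta>}. (0, 0) + t *\<^sub>R (a, b) \<in> {p. \<Phi> p \<in> W}"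
        using Phi_scale[of _ "(a,b)"] by auto
    qed
  qed
  show ?thesis
    unfolding D ic_def affD closed_eq W_def[symmetric] using icr_eq by simp
qed

end
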